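(* Let $R=(V,E_R,w)$ be a connected weighted graph on a vertex set $V$ with $|V|=n\ge 3$ and edge weights in $[0,B]$. Then $$\frac{\mathrm{RS}_f(R)}{\mathrm{GS}_f}=\frac{\max_{S\subset V:\ \exists u\in S,\,v\in V\setminus S,\ \{u,v\}\notin E_R} w_1(S)}{B},$$ where $w_1(S)$ is the minimum weight among edges of $E_R$ crossing the cut $(S,V\setminus S)$.
   Context: For a weighted graph $G$, $f(G)$ denotes the total weight of a minimum spanning tree of $G$. Two graphs on the same vertex set $V$ are edge-weight adjacent if one is obtained from the other by adding one edge $e\in\binom{V}{2}$ not already present, with a weight in $[0,B]$. The global sensitivity $\mathrm{GS}_f$ is the maximum of $|f(G)-f(G')|$ over all pairs of edge-weight adjacent connected graphs on $n$ vertices with edge weights in $[0,B]$. The retain sensitivity is $\mathrm{RS}_f(R)=\max|f((V,E_R))-f((V,E_R\cup\{e\}))|$, the maximum over edges $e\in\binom{V}{2}\setminus E_R$ and over weights $w(e)\in[0,B]$. *)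

theory Defs
  imports Complex_Main
begin

text \<open>Graphs on a vertex set V: edges are 2-element subsets of V.
  Weights are functions on edges (only values on the edge set matter).\<close>

definition edges_on :: "'a set \<Rightarrow> 'a set set" where
  "edges_on V = {e. e \<subseteq> V \<and> card e = 2}"

definition graph_connected :: "'a set \<Rightarrow> 'a set set \<Rightarrow> bool" where
  "graph_connected V E \<longleftrightarrow>
     (\<forall>u\<in>V. \<forall>v\<in>V. (u, v) \<in> {(x, y). {x, y} \<in> E}\<^sup>*)"

definition spanning_tree :: "'a set \<Rightarrow> 'a set set \<Rightarrow> 'a set set \<Rightarrow> bool" where
  "spanning_tree V E T \<longleftrightarrow> T \<subseteq> E \<and> graph_connected V T \<and>
     (\<forall>e\<in>T. \<not> graph_connected V (T - {e}))"

definition mst_weight :: "'a set \<Rightarrow> 'a set set \<Rightarrow> ('a set \<Rightarrow> real) \<Rightarrow> real" where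
  "mst_weight V E w = Min {(\<Sum>e\<in>T. w e) | T. spanning_tree V E T}"

definition weighted_graph :: "'a set \<Rightarrow> 'a set set \<Rightarrow> ('a set \<Rightarrow> real) \<Rightarrow> real \<Rightarrow> bool" where
  "weighted_graph V E w B \<longleftrightarrow> E \<subseteq> edges_on V \<and> (\<forall>e\<in>E. 0 \<le> w e \<and> w e \<le> B)"

definition max_or0 :: "real set \<Rightarrow> real" where
  "max_or0 A = (if A = {} then 0 else Sup A)"

definition GS_mst :: "'a set \<Rightarrow> real \<Rightarrow> real" where
  "GS_mst V B = Sup {\<bar>mst_weight V E w - mst_weight V (insert e E) (w(e := x))\<bar> | E w e x.
      weighted_graph V E w B \<and> graph_connected V E \<and>
      e \<in> edges_on V \<and> e \<notin> E \<and> 0 \<le> x \<and> x \<le> B}"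

definition RS_mst :: "'a set \<Rightarrow> 'a set set \<Rightarrow> ('a set \<Rightarrow> real) \<Rightarrow> real \<Rightarrow> real" where
  "RS_mst V E w B = max_or0 {\<bar>mst_weight V E w - mst_weight V (insert e E) (w(e := x))\<bar> | e x.
      e \<in> edges_on V \<and> e \<notin> E \<and> 0 \<le> x \<and> x \<le> B}"

definition cut_min_weight :: "'a set \<Rightarrow> 'a set set \<Rightarrow> ('a set \<Rightarrow> real) \<Rightarrow> 'a set \<Rightarrow> real" where
  "cut_min_weight V E w S = Min {w e | e. e \<in> E \<and> (\<exists>u\<in>S. \<exists>v\<in>V - S. e = {u, v})}"

end

theory Submission
  imports Defs
begin


definition erel :: "'a set set \<Rightarrow> ('a \<times> 'a) set" where
  "erel H = {(x, y). {x, y} \<in> H}"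

lemma gc_def2: "graph_connected V H \<longleftrightarrow> (\<forall>u\<in>V. \<forall>v\<in>V. (u, v) \<in> (erel H)\<^sup>*)"
  unfolding graph_connected_def erel_def by simp

lemma erel_iff[simp]: "(x,y) \<in> erel H \<longleftrightarrow> {x,y} \<in> H"
  unfolding erel_def by simp

lemma erel_sym: "(a,b) \<in> (erel H)\<^sup>* \<Longrightarrow> (b,a) \<in> (erel H)\<^sup>*"
proof (induction rule: rtrancl_induct)
  case base then show ?case by simp
next
  case (step y z)
  have "(z,y) \<in> erel H" using step(2) by (simp add: insert_commute)
  then show ?case using step(3) by (rule converse_rtrancl_into_rtrancl)
qed

lemma erel_mono: "H \<subseteq> H' \<Longrightarrow> (a,b) \<in> (erel H)\<^sup>* \<Longrightarrow> (a,b) \<in> (erel H')\<^sup>*"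
proof -
  assume "H \<subseteq> H'" "(a,b) \<in> (erel H)\<^sup>*"
  moreover have "erel H \<subseteq> erel H'" using \<open>H \<subseteq> H'\<close> unfolding erel_def by auto
  ultimately show ?thesis using rtrancl_mono by blast
qed

lemma edge_rt: "{x,y} \<in> H \<Longrightarrow> (x,y) \<in> (erel H)\<^sup>*" by auto

lemma conn_from:
  assumes "c \<in> V" "\<And>y. y \<in> V \<Longrightarrow> (c,y) \<in> (erel H)\<^sup>*"
  shows "graph_connected V H"
  unfolding gc_def2
proof (intro ballI)
  fix u v assume "u \<in> V" "v \<in> V"
  have "(u,c) \<in> (erel H)\<^sup>*" using assms(2)[OF \<open>u\<in>V\<close>] by (rule erel_sym)
  then show "(u,v) \<in> (erel H)\<^sup>*" using assms(2)[OF \<open>v\<in>V\<close>] by (rule rtrancl_trans)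
qed

lemma split_L:
  assumes "(a,y) \<in> (erel H)\<^sup>*"
  shows "(a,y) \<in> (erel (H - {{p,q}}))\<^sup>* \<or> (p,y) \<in> (erel (H - {{p,q}}))\<^sup>* \<or> (q,y) \<in> (erel (H - {{p,q}}))\<^sup>*"
  using assms
proof (induction rule: rtrancl_induct)
  case base then show ?case by simp
next
  case (step y z)
  show ?case
  proof (cases "{y,z} = {p,q}")
    case True
    then have "z \<in> {p,q}" by blast
    then show ?thesis by auto
  next
    case False
    then have "(y,z) \<in> erel (H - {{p,q}})" using step(2) by simp
    then show ?thesis using step(3) by (meson rtrancl.rtrancl_into_rtrancl)
  qed
qed

lemma cross_exists0:
  assumes "(a,b) \<in> (erel H)\<^sup>*" "a \<in> A"
  shows "b \<in> A \<or> (\<exists>p q. {p,q} \<in> H \<and> p \<in> A \<and> q \<notin> A)"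
  using assms by (induction rule: rtrancl_induct) auto

lemma cross_exists:
  assumes "(a,b) \<in> (erel H)\<^sup>*" "a \<in> A" "b \<notin> A"
  shows "\<exists>p q. {p,q} \<in> H \<and> p \<in> A \<and> q \<notin> A"
  using cross_exists0[OF assms(1,2)] assms(3) by blast

lemma edgeV: "E \<subseteq> edges_on V \<Longrightarrow> {p,q} \<in> E \<Longrightarrow> p \<in> V \<and> q \<in> V"
  unfolding edges_on_def by auto

lemma edge2: "g \<in> edges_on V \<Longrightarrow> \<exists>p q. g = {p,q} \<and> p \<noteq> q \<and> p \<in> V \<and> q \<in> V"
  unfolding edges_on_def by (auto simp: card_2_iff)

lemma fin_edges: "finite V \<Longrightarrow> finite (edges_on V)"
proof -
  assume "finite V"
  have "edges_on V \<subseteq> Pow V" unfolding edges_on_def by auto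
  then show ?thesis using \<open>finite V\<close> finite_subset by blast
qed

lemma exists_st:
  assumes "finite H" "H \<subseteq> E" "graph_connected V H"
  shows "\<exists>T\<subseteq>H. spanning_tree V E T"
  using assms
proof (induction H rule: finite_psubset_induct)
  case (psubset H)
  show ?case
  proof (cases "\<forall>e\<in>H. \<not> graph_connected V (H - {e})")
    case True
    then have "spanning_tree V E H" using psubset.prems unfolding spanning_tree_def by blast
    then show ?thesis by blast
  next
    case False
    then obtain e where "e \<in> H" "graph_connected V (H - {e})" by blast
    then have "H - {e} \<subset> H" by blast
    from psubset.IH[OF this] obtain T where "T \<subseteq> H - {e}" "spanning_tree V E T"
      using psubset.prems \<open>graph_connected V (H - {e})\<close> by blast
    then show ?thesis by blast
  qed
qed

lemma fin_st: "finite E \<Longrightarrow> finite {(\<Sum>e\<in>T. w e) | T. spanning_tree V E T}"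
proof -
  assume "finite E"
  have "{T. spanning_tree V E T} \<subseteq> Pow E" by (auto simp: spanning_tree_def)
  then have "finite {T. spanning_tree V E T}" using \<open>finite E\<close> finite_subset by blast
  then show ?thesis by simp
qed

lemma mst_att:
  assumes "finite E" "graph_connected V E"
  shows "\<exists>T. spanning_tree V E T \<and> mst_weight V E w = (\<Sum>e\<in>T. w e)"
proof -
  obtain T where "spanning_tree V E T" using exists_st[OF assms(1) order_refl assms(2)] by blast
  then have "{(\<Sum>e\<in>T. w e) | T. spanning_tree V E T} \<noteq> {}" by blast
  from Min_in[OF fin_st[OF assms(1)] this] show ?thesis unfolding mst_weight_def by auto
qed

lemma mst_le_st: "finite E \<Longrightarrow> spanning_tree V E T \<Longrightarrow> mst_weight V E w \<le> (\<Sum>e\<in>T. w e)"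
  unfolding mst_weight_def by (rule Min_le) (auto intro: fin_st)

lemma mst_le_conn:
  assumes "finite E" "H \<subseteq> E" "graph_connected V H" "\<forall>e\<in>E. 0 \<le> w e"
  shows "mst_weight V E w \<le> (\<Sum>e\<in>H. w e)"
proof -
  have fH: "finite H" using assms(1,2) finite_subset by blast
  obtain T where T: "T \<subseteq> H" "spanning_tree V E T" using exists_st[OF fH assms(2,3)] by blast
  have "mst_weight V E w \<le> (\<Sum>e\<in>T. w e)" by (rule mst_le_st[OF assms(1) T(2)])
  also have "\<dots> \<le> (\<Sum>e\<in>H. w e)" using fH T(1) assms(2,4) by (intro sum_mono2) auto
  finally show ?thesis .
qed



definition MX :: "'a set \<Rightarrow> 'a set set \<Rightarrow> ('a set \<Rightarrow> real) \<Rightarrow> real" where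
  "MX V E w = max_or0 {cut_min_weight V E w S | S. S \<subseteq> V \<and> (\<exists>u\<in>S. \<exists>v\<in>V - S. {u, v} \<notin> E)}"

locale wgc =
  fixes V :: "'a set" and E :: "'a set set" and w :: "'a set \<Rightarrow> real" and B :: real
  assumes fV: "finite V" and EV: "E \<subseteq> edges_on V" and wE: "\<forall>e\<in>E. 0 \<le> w e \<and> w e \<le> B"
    and conn: "graph_connected V E"
begin

lemma fE: "finite E" using fin_edges[OF fV] EV finite_subset by blast

lemma cut_facts:
  assumes "u \<in> S" "v \<in> V" "v \<notin> S" "u \<in> V"
  shows "\<exists>p q. {p,q} \<in> E \<and> p \<in> S \<and> q \<in> V - S \<and> w {p,q} = cut_min_weight V E w S"
   and "\<And>p q. {p,q} \<in> E \<Longrightarrow> p \<in> S \<Longrightarrow> q \<in> V - S \<Longrightarrow> cut_min_weight V E w S \<le> w {p,q}"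
   and "0 \<le> cut_min_weight V E w S" "cut_min_weight V E w S \<le> B"
proof -
  let ?C = "{w e | e. e \<in> E \<and> (\<exists>u\<in>S. \<exists>v\<in>V - S. e = {u, v})}"
  have fC: "finite ?C" using fE by simp
  have "(u,v) \<in> (erel E)\<^sup>*" using conn assms unfolding gc_def2 by blast
  then obtain p q where pq: "{p,q} \<in> E" "p \<in> S" "q \<notin> S" using cross_exists assms by metis
  then have "q \<in> V" using edgeV[OF EV] by blast
  with pq have "w {p,q} \<in> ?C" by blast
  then have ne: "?C \<noteq> {}" by blast
  have mi: "cut_min_weight V E w S \<in> ?C" unfolding cut_min_weight_def using Min_in[OF fC ne] .
  then show "\<exists>p q. {p,q} \<in> E \<and> p \<in> S \<and> q \<in> V - S \<and> w {p,q} = cut_min_weight V E w S" by fastforce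
  show "\<And>p q. {p,q} \<in> E \<Longrightarrow> p \<in> S \<Longrightarrow> q \<in> V - S \<Longrightarrow> cut_min_weight V E w S \<le> w {p,q}"
    unfolding cut_min_weight_def by (rule Min_le[OF fC]) blast
  show "0 \<le> cut_min_weight V E w S" "cut_min_weight V E w S \<le> B" using mi wE by auto
qed

lemma MX_ge:
  assumes "S \<subseteq> V" "u \<in> S" "v \<in> V - S" "{u,v} \<notin> E"
  shows "cut_min_weight V E w S \<le> MX V E w"
proof -
  let ?X = "{cut_min_weight V E w S | S. S \<subseteq> V \<and> (\<exists>u\<in>S. \<exists>v\<in>V - S. {u, v} \<notin> E)}"
  have "?X = (\<lambda>S. cut_min_weight V E w S) ` {S. S \<subseteq> V \<and> (\<exists>u\<in>S. \<exists>v\<in>V - S. {u, v} \<notin> E)}" by blast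
  moreover have "finite {S. S \<subseteq> V \<and> (\<exists>u\<in>S. \<exists>v\<in>V - S. {u, v} \<notin> E)}"
  proof (rule finite_subset)
    show "{S. S \<subseteq> V \<and> (\<exists>u\<in>S. \<exists>v\<in>V - S. {u, v} \<notin> E)} \<subseteq> Pow V" by auto
  qed (use fV in simp)
  ultimately have fX: "finite ?X" by simp
  have m: "cut_min_weight V E w S \<in> ?X" using assms by blast
  then have "?X \<noteq> {}" by blast
  then show ?thesis unfolding MX_def max_or0_def using cSup_upper[OF m] fX bdd_above_finite by auto
qed

lemma MX_le:
  assumes "B \<ge> 0" shows "MX V E w \<le> B"
proof -
  let ?X = "{cut_min_weight V E w S | S. S \<subseteq> V \<and> (\<exists>u\<in>S. \<exists>v\<in>V - S. {u, v} \<notin> E)}"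
  have "\<forall>y \<in> ?X. y \<le> B"
  proof
    fix y assume "y \<in> ?X"
    then obtain S u v where "y = cut_min_weight V E w S" "S \<subseteq> V" "u \<in> S" "v \<in> V" "v \<notin> S" by blast
    then show "y \<le> B" using cut_facts(4)[of u S v] by auto
  qed
  then have "?X \<noteq> {} \<Longrightarrow> Sup ?X \<le> B" by (meson cSup_least)
  then show ?thesis unfolding MX_def max_or0_def using assms by auto
qed

lemma mono_d:
  assumes "e \<notin> E" "e \<in> edges_on V"
  shows "mst_weight V (insert e E) (w(e:=x)) \<le> mst_weight V E w"
proof -
  obtain T where T: "spanning_tree V E T" "mst_weight V E w = (\<Sum>e\<in>T. w e)"
    using mst_att[OF fE conn] by blast
  have "spanning_tree V (insert e E) T" using T(1) unfolding spanning_tree_def by blast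
  then have "mst_weight V (insert e E) (w(e:=x)) \<le> (\<Sum>f\<in>T. (w(e:=x)) f)"
    using fE by (intro mst_le_st) auto
  also have "\<dots> = (\<Sum>f\<in>T. w f)" using T(1) assms(1) unfolding spanning_tree_def
    by (intro sum.cong) auto
  finally show ?thesis using T(2) by simp
qed

end


lemma bridge:
  assumes "graph_connected V T" "p \<in> V" "\<not> graph_connected V (T - {{p,q}})"
  shows "(p,q) \<notin> (erel (T - {{p,q}}))\<^sup>*"
proof
  assume a: "(p,q) \<in> (erel (T - {{p,q}}))\<^sup>*"
  have "graph_connected V (T - {{p,q}})"
  proof (rule conn_from[OF assms(2)])
    fix y assume "y \<in> V"
    then have "(p,y) \<in> (erel T)\<^sup>*" using assms(1,2) unfolding gc_def2 by blast
    from split_L[OF this, of p q] show "(p,y) \<in> (erel (T - {{p,q}}))\<^sup>*"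
      using rtrancl_trans[OF a] by blast
  qed
  with assms(3) show False by simp
qed

lemma forest:
  assumes "finite F" "F \<subseteq> T" "T \<subseteq> edges_on V"
   and br: "\<forall>p q. {p,q} \<in> T \<longrightarrow> (p,q) \<notin> (erel (T - {{p,q}}))\<^sup>*"
   and uvT: "(u,v) \<in> (erel T)\<^sup>*"
   and all: "\<forall>g\<in>F. (u,v) \<in> (erel (T - {g}))\<^sup>*"
  shows "(u,v) \<in> (erel (T - F))\<^sup>*"
  using assms(1,2,6)
proof (induction F rule: finite_induct)
  case empty then show ?case using uvT by simp
next
  case (insert g F)
  have IH: "(u,v) \<in> (erel (T - F))\<^sup>*" using insert by auto
  obtain p q where g: "g = {p,q}" using edge2 insert.prems(1) assms(3) by blast
  define H where "H = T - F"
  have HH: "T - insert g F = H - {{p,q}}" unfolding H_def g by auto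
  have sub: "H - {{p,q}} \<subseteq> T - {{p,q}}" unfolding H_def by auto
  have uvg: "(u,v) \<in> (erel (T - {{p,q}}))\<^sup>*" using insert.prems g by auto
  have npq: "(p,q) \<notin> (erel (T - {{p,q}}))\<^sup>*" using br insert.prems(1) g by auto
  let ?X = "(erel (H - {{p,q}}))\<^sup>*"
  let ?Y = "(erel (T - {{p,q}}))\<^sup>*"
  have XY: "\<And>a b. (a,b) \<in> ?X \<Longrightarrow> (a,b) \<in> ?Y" using erel_mono[OF sub] by blast
  have s1: "(u,v) \<in> ?X \<or> (p,v) \<in> ?X \<or> (q,v) \<in> ?X" using split_L[OF IH[folded H_def]] .
  have s2: "(v,u) \<in> ?X \<or> (p,u) \<in> ?X \<or> (q,u) \<in> ?X" using split_L[OF erel_sym[OF IH[folded H_def]]] .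
  have "(u,v) \<in> ?X"
  proof -
    { assume pv: "(p,v) \<in> ?X" and qu: "(q,u) \<in> ?X"
      have a: "(p,v) \<in> ?Y" "(q,u) \<in> ?Y" using XY pv qu by auto
      have "(p,q) \<in> ?Y" using rtrancl_trans[OF rtrancl_trans[OF a(1) erel_sym[OF uvg]] erel_sym[OF a(2)]] .
      with npq have False by simp }
    moreover
    { assume qv: "(q,v) \<in> ?X" and pu: "(p,u) \<in> ?X"
      have a: "(q,v) \<in> ?Y" "(p,u) \<in> ?Y" using XY qv pu by auto
      have "(p,q) \<in> ?Y" using rtrancl_trans[OF rtrancl_trans[OF a(2) uvg] erel_sym[OF a(1)]] .
      with npq have False by simp }
    moreover
    { assume a: "(p,u) \<in> ?X" "(p,v) \<in> ?X" have "(u,v) \<in> ?X" using rtrancl_trans[OF erel_sym[OF a(1)] a(2)] . }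
    moreover
    { assume a: "(q,u) \<in> ?X" "(q,v) \<in> ?X" have "(u,v) \<in> ?X" using rtrancl_trans[OF erel_sym[OF a(1)] a(2)] . }
    moreover
    { assume "(v,u) \<in> ?X" then have "(u,v) \<in> ?X" by (rule erel_sym) }
    ultimately show ?thesis using s1 s2 by blast
  qed
  then show ?case using HH by simp
qed

context wgc
begin

lemma upper:
  assumes uv: "u \<in> V" "v \<in> V" "u \<noteq> v" and ne: "{u,v} \<notin> E" and x: "0 \<le> x"
  shows "mst_weight V E w - mst_weight V (insert {u,v} E) (w({u,v}:=x)) \<le> MX V E w"
proof -
  define e where "e = {u,v}"
  define w' where "w' = w(e:=x)"
  define E' where "E' = insert e E"
  have fE': "finite E'" using fE E'_def by simp
  have connE': "graph_connected V E'" using conn erel_mono[of E "insert e E"] unfolding gc_def2 E'_def by blast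
  obtain T' where T': "spanning_tree V E' T'" "mst_weight V E' w' = (\<Sum>f\<in>T'. w' f)"
    using mst_att[OF fE' connE'] by blast
  define R where "R = T' - {e}"
  have RE: "R \<subseteq> E" using T'(1) unfolding spanning_tree_def R_def E'_def by auto
  have fT': "finite T'" using T'(1) fE' unfolding spanning_tree_def using finite_subset by blast
  have sR: "(\<Sum>f\<in>R. w f) = (\<Sum>f\<in>R. w' f)" using RE ne unfolding w'_def e_def by (intro sum.cong) auto
  have sT: "(\<Sum>f\<in>R. w' f) \<le> (\<Sum>f\<in>T'. w' f)"
  proof (cases "e \<in> T'")
    case True
    then have "(\<Sum>f\<in>T'. w' f) = w' e + (\<Sum>f\<in>R. w' f)" unfolding R_def using fT' by (simp add: sum.remove)
    then show ?thesis using x unfolding w'_def by simp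
  next
    case False then show ?thesis unfolding R_def by simp
  qed
  have X0: "0 \<le> MX V E w"
  proof -
    have "0 \<le> cut_min_weight V E w {u}" using cut_facts(3)[of u "{u}" v] uv by auto
    also have "\<dots> \<le> MX V E w" using MX_ge[of "{u}" u v] uv ne by auto
    finally show ?thesis .
  qed
  show ?thesis
  proof (cases "graph_connected V R")
    case True
    have "mst_weight V E w \<le> (\<Sum>f\<in>R. w f)" using mst_le_conn[OF fE RE True] wE by auto
    then show ?thesis using sR sT T'(2) X0 unfolding E'_def w'_def e_def by linarith
  next
    case False
    have Tc: "(u,y) \<in> (erel T')\<^sup>*" if "y \<in> V" for y
      using T'(1) uv that unfolding spanning_tree_def gc_def2 by blast
    have sp: "(u,y) \<in> (erel R)\<^sup>* \<or> (v,y) \<in> (erel R)\<^sup>*" if "y \<in> V" for y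
      using split_L[OF Tc[OF that], of u v] unfolding R_def e_def by auto
    have nuv: "(u,v) \<notin> (erel R)\<^sup>*"
    proof
      assume a: "(u,v) \<in> (erel R)\<^sup>*"
      have "graph_connected V R"
      proof (rule conn_from[OF uv(1)])
        fix y assume "y \<in> V" then show "(u,y) \<in> (erel R)\<^sup>*" using sp rtrancl_trans[OF a] by blast
      qed
      with False show False by simp
    qed
    define A where "A = {y \<in> V. (u,y) \<in> (erel R)\<^sup>*}"
    have A: "A \<subseteq> V" "u \<in> A" "v \<notin> A" using uv nuv unfolding A_def by auto
    obtain p q where pq: "{p,q} \<in> E" "p \<in> A" "q \<in> V - A" "w {p,q} = cut_min_weight V E w A"
      using cut_facts(1)[of u A v] A uv by blast
    define H where "H = insert {p,q} R"
    have RH: "R \<subseteq> H" unfolding H_def by auto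
    have HE: "H \<subseteq> E" using RE pq unfolding H_def by auto
    have "(u,p) \<in> (erel R)\<^sup>*" using pq(2) unfolding A_def by auto
    then have up: "(u,p) \<in> (erel H)\<^sup>*" by (rule erel_mono[OF RH])
    have qv: "(q,v) \<in> (erel H)\<^sup>*"
    proof -
      have "(u,q) \<notin> (erel R)\<^sup>*" using pq(3) unfolding A_def by auto
      then have "(v,q) \<in> (erel R)\<^sup>*" using sp pq(3) by auto
      then show ?thesis using erel_sym[OF erel_mono[OF RH]] by blast
    qed
    have "(p,q) \<in> (erel H)\<^sup>*" by (rule r_into_rtrancl) (simp add: H_def)
    then have uv': "(u,v) \<in> (erel H)\<^sup>*" using rtrancl_trans[OF rtrancl_trans[OF up] qv] by blast
    have Hc: "graph_connected V H"
    proof (rule conn_from[OF uv(1)])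
      fix y assume "y \<in> V"
      then consider "(u,y) \<in> (erel R)\<^sup>*" | "(v,y) \<in> (erel R)\<^sup>*" using sp by blast
      then show "(u,y) \<in> (erel H)\<^sup>*"
      proof cases
        case 1 then show ?thesis using erel_mono[OF RH] by blast
      next
        case 2 then have "(v,y) \<in> (erel H)\<^sup>*" using erel_mono[OF RH] by blast
        with uv' show ?thesis by (rule rtrancl_trans)
      qed
    qed
    have fR: "finite R" using RE fE finite_subset by blast
    have "mst_weight V E w \<le> (\<Sum>f\<in>H. w f)" using mst_le_conn[OF fE HE Hc] wE by auto
    also have "\<dots> \<le> w {p,q} + (\<Sum>f\<in>R. w f)"
      unfolding H_def using fR wE pq(1) by (simp add: sum.insert_if)
    finally have m: "mst_weight V E w \<le> w {p,q} + (\<Sum>f\<in>R. w f)" .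
    have "w {p,q} \<le> MX V E w" using pq(4) MX_ge[of A u v] A uv ne by auto
    then show ?thesis using m sR sT T'(2) unfolding E'_def w'_def e_def by linarith
  qed
qed

lemma lower:
  assumes S: "S \<subseteq> V" "u \<in> S" "v \<in> V" "v \<notin> S" and ne: "{u,v} \<notin> E"
  shows "cut_min_weight V E w S \<le> mst_weight V E w - mst_weight V (insert {u,v} E) (w({u,v}:=0))"
proof -
  define e where "e = {u,v}"
  define w' where "w' = w(e:=0)"
  define E' where "E' = insert e E"
  have uV: "u \<in> V" using S by auto
  obtain T where T: "spanning_tree V E T" "mst_weight V E w = (\<Sum>f\<in>T. w f)"
    using mst_att[OF fE conn] by blast
  have TE: "T \<subseteq> E" and Tc: "graph_connected V T" and Tm: "\<forall>g\<in>T. \<not> graph_connected V (T - {g})"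
    using T(1) unfolding spanning_tree_def by auto
  have fT: "finite T" using TE fE finite_subset by blast
  have TV: "T \<subseteq> edges_on V" using TE EV by auto
  have br: "\<forall>p q. {p,q} \<in> T \<longrightarrow> (p,q) \<notin> (erel (T - {{p,q}}))\<^sup>*"
  proof (intro allI impI)
    fix p q assume pqT: "{p,q} \<in> T"
    then have "p \<in> V" using edgeV[OF TV] by blast
    show "(p,q) \<notin> (erel (T - {{p,q}}))\<^sup>*"
      by (rule bridge[OF Tc \<open>p\<in>V\<close>]) (use Tm pqT in blast)
  qed
  define C where "C = {g \<in> T. \<exists>p\<in>S. \<exists>q\<in>V-S. g = {p,q}}"
  have fC: "finite C" "C \<subseteq> T" using fT unfolding C_def by auto
  have uvT: "(u,v) \<in> (erel T)\<^sup>*" using Tc uV S unfolding gc_def2 by blast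
  have "\<exists>g\<in>C. (u,v) \<notin> (erel (T - {g}))\<^sup>*"
  proof (rule ccontr)
    assume "\<not> (\<exists>g\<in>C. (u,v) \<notin> (erel (T - {g}))\<^sup>*)"
    then have "(u,v) \<in> (erel (T - C))\<^sup>*" using forest[OF fC TV br uvT] by blast
    moreover have "\<And>y. (u,y) \<in> (erel (T - C))\<^sup>* \<Longrightarrow> y \<in> S"
    proof -
      fix y assume "(u,y) \<in> (erel (T - C))\<^sup>*"
      then show "y \<in> S"
      proof (induction rule: rtrancl_induct)
        case base then show ?case using S by simp
      next
        case (step y z)
        then have yz: "{y,z} \<in> T" "{y,z} \<notin> C" by auto
        moreover have "z \<in> V" using edgeV[OF TV yz(1)] by blast
        ultimately show ?case using step.IH unfolding C_def by blast
      qed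
    qed
    ultimately show False using S by blast
  qed
  then obtain p q where g: "{p,q} \<in> T" "p \<in> S" "q \<in> V - S" "(u,v) \<notin> (erel (T - {{p,q}}))\<^sup>*"
    unfolding C_def by blast
  define R where "R = T - {{p,q}}"
  define H where "H = insert e R"
  have pV: "p \<in> V" using g S by auto
  have RH: "R \<subseteq> H" unfolding H_def by auto
  have Tp: "(p,y) \<in> (erel T)\<^sup>*" if "y \<in> V" for y using Tc pV that unfolding gc_def2 by blast
  have sp: "(p,y) \<in> (erel R)\<^sup>* \<or> (q,y) \<in> (erel R)\<^sup>*" if "y \<in> V" for y
    using split_L[OF Tp[OF that], of p q] unfolding R_def by auto
  have euv1: "(u,v) \<in> (erel H)\<^sup>*" by (rule r_into_rtrancl) (simp add: H_def e_def)
  have euv: "(u,v) \<in> (erel H)\<^sup>*" "(v,u) \<in> (erel H)\<^sup>*" using euv1 erel_sym[OF euv1] by auto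
  have pq: "(p,q) \<in> (erel H)\<^sup>*"
  proof -
    have "(p,u) \<in> (erel R)\<^sup>* \<or> (q,u) \<in> (erel R)\<^sup>*" "(p,v) \<in> (erel R)\<^sup>* \<or> (q,v) \<in> (erel R)\<^sup>*"
      using sp uV S by auto
    moreover have "\<not>((p,u) \<in> (erel R)\<^sup>* \<and> (p,v) \<in> (erel R)\<^sup>*)"
      using g(4) rtrancl_trans[OF erel_sym[of p u R], of v] unfolding R_def by blast
    moreover have "\<not>((q,u) \<in> (erel R)\<^sup>* \<and> (q,v) \<in> (erel R)\<^sup>*)"
      using g(4) rtrancl_trans[OF erel_sym[of q u R], of v] unfolding R_def by blast
    ultimately consider "(p,u) \<in> (erel R)\<^sup>* \<and> (q,v) \<in> (erel R)\<^sup>*"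
      | "(p,v) \<in> (erel R)\<^sup>* \<and> (q,u) \<in> (erel R)\<^sup>*" by blast
    then show ?thesis
    proof cases
      case 1 then have "(p,u) \<in> (erel H)\<^sup>*" "(v,q) \<in> (erel H)\<^sup>*"
        using erel_mono[OF RH] erel_sym[OF erel_mono[OF RH]] by blast+
      then show ?thesis using rtrancl_trans[OF rtrancl_trans[of p u _ v] ] euv by blast
    next
      case 2 then have "(p,v) \<in> (erel H)\<^sup>*" "(u,q) \<in> (erel H)\<^sup>*"
        using erel_mono[OF RH] erel_sym[OF erel_mono[OF RH]] by blast+
      then show ?thesis using rtrancl_trans[OF rtrancl_trans[of p v _ u] ] euv by blast
    qed
  qed
  have Hc: "graph_connected V H"
  proof (rule conn_from[OF pV])
    fix y assume "y \<in> V"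
    then consider "(p,y) \<in> (erel R)\<^sup>*" | "(q,y) \<in> (erel R)\<^sup>*" using sp by blast
    then show "(p,y) \<in> (erel H)\<^sup>*"
    proof cases
      case 1 then show ?thesis using erel_mono[OF RH] by blast
    next
      case 2 then have "(q,y) \<in> (erel H)\<^sup>*" using erel_mono[OF RH] by blast
      with pq show ?thesis by (rule rtrancl_trans)
    qed
  qed
  have fE': "finite E'" using fE unfolding E'_def by simp
  have HE': "H \<subseteq> E'" using TE unfolding H_def R_def E'_def by auto
  have wE': "\<forall>f\<in>E'. 0 \<le> w' f" using wE unfolding E'_def w'_def by auto
  have eR: "e \<notin> R" using TE ne unfolding R_def e_def by auto
  have fR: "finite R" using fT unfolding R_def by simp
  have "mst_weight V E' w' \<le> (\<Sum>f\<in>H. w' f)" using mst_le_conn[OF fE' HE' Hc wE'] .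
  also have "\<dots> = w' e + (\<Sum>f\<in>R. w' f)" unfolding H_def using eR fR by simp
  also have "\<dots> = (\<Sum>f\<in>R. w f)"
  proof -
    have "(\<Sum>f\<in>R. w' f) = (\<Sum>f\<in>R. w f)" using eR unfolding w'_def by (intro sum.cong) auto
    moreover have "w' e = 0" unfolding w'_def by simp
    ultimately show ?thesis by simp
  qed
  also have "\<dots> = (\<Sum>f\<in>T. w f) - w {p,q}" unfolding R_def using fT g(1) by (simp add: sum_diff1)
  finally have "mst_weight V E' w' \<le> mst_weight V E w - w {p,q}" using T(2) by simp
  moreover have "cut_min_weight V E w S \<le> w {p,q}" using cut_facts(2)[of u S v p q] g S TE uV by auto
  ultimately show ?thesis unfolding E'_def w'_def e_def by linarith
qed

end


lemma max_or0_ne: "A \<noteq> {} \<Longrightarrow> max_or0 A = Sup A" by (simp add: max_or0_def)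

context wgc
begin

lemma d_bounds:
  assumes "e \<in> edges_on V" "e \<notin> E" "0 \<le> x"
  shows "0 \<le> mst_weight V E w - mst_weight V (insert e E) (w(e:=x))"
    and "mst_weight V E w - mst_weight V (insert e E) (w(e:=x)) \<le> MX V E w"
proof -
  show "0 \<le> mst_weight V E w - mst_weight V (insert e E) (w(e:=x))"
    using mono_d[OF assms(2,1)] by simp
  obtain u v where e: "e = {u,v}" "u \<noteq> v" "u \<in> V" "v \<in> V" using edge2[OF assms(1)] by blast
  show "mst_weight V E w - mst_weight V (insert e E) (w(e:=x)) \<le> MX V E w"
    using upper[of u v x] e assms by simp
qed

lemma MX_nonneg: "0 \<le> MX V E w"
proof -
  let ?X = "{cut_min_weight V E w S | S. S \<subseteq> V \<and> (\<exists>u\<in>S. \<exists>v\<in>V - S. {u, v} \<notin> E)}"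
  show ?thesis
  proof (cases "?X = {}")
    case True then show ?thesis unfolding MX_def max_or0_def by simp
  next
    case False
    then obtain S u v where S: "S \<subseteq> V" "u \<in> S" "v \<in> V - S" "{u, v} \<notin> E" by blast
    have "0 \<le> cut_min_weight V E w S" using cut_facts(3)[of u S v] S by auto
    also have "\<dots> \<le> MX V E w" using MX_ge[OF S] .
    finally show ?thesis .
  qed
qed

lemma RS_eq:
  assumes B0: "0 \<le> B"
  shows "RS_mst V E w B = MX V E w"
proof -
  let ?D = "{\<bar>mst_weight V E w - mst_weight V (insert e E) (w(e := x))\<bar> | e x.
      e \<in> edges_on V \<and> e \<notin> E \<and> 0 \<le> x \<and> x \<le> B}"
  let ?X = "{cut_min_weight V E w S | S. S \<subseteq> V \<and> (\<exists>u\<in>S. \<exists>v\<in>V - S. {u, v} \<notin> E)}"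
  have Dle: "\<forall>y\<in>?D. 0 \<le> y \<and> y \<le> MX V E w"
  proof
    fix y assume "y \<in> ?D"
    then obtain e x where y: "y = \<bar>mst_weight V E w - mst_weight V (insert e E) (w(e := x))\<bar>"
      "e \<in> edges_on V" "e \<notin> E" "0 \<le> x" by blast
    have "0 \<le> mst_weight V E w - mst_weight V (insert e E) (w(e := x))"
      "mst_weight V E w - mst_weight V (insert e E) (w(e := x)) \<le> MX V E w" by (rule d_bounds[OF y(2,3,4)])+
    then show "0 \<le> y \<and> y \<le> MX V E w" unfolding y(1) by linarith
  qed
  have bdd: "bdd_above ?D" by (rule bdd_aboveI[of _ "MX V E w"]) (use Dle in blast)
  have RS0: "0 \<le> RS_mst V E w B"
  proof (cases "?D = {}")
    case True then show ?thesis unfolding RS_mst_def max_or0_def by simp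
  next
    case False
    then obtain y where "y \<in> ?D" by blast
    then have "0 \<le> y" "y \<le> Sup ?D" using Dle apply blast by (rule cSup_upper[OF _ bdd]) fact
    then show ?thesis unfolding RS_mst_def max_or0_ne[OF False] by linarith
  qed
  have le1: "RS_mst V E w B \<le> MX V E w"
  proof (cases "?D = {}")
    case True then show ?thesis unfolding RS_mst_def max_or0_def using MX_nonneg by simp
  next
    case False
    have "Sup ?D \<le> MX V E w" using False by (rule cSup_least) (use Dle in blast)
    then show ?thesis unfolding RS_mst_def max_or0_ne[OF False] .
  qed
  have le2: "MX V E w \<le> RS_mst V E w B"
  proof (cases "?X = {}")
    case True then show ?thesis unfolding MX_def max_or0_def using RS0 by simp
  next
    case False
    have "\<forall>y\<in>?X. y \<le> RS_mst V E w B"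
    proof
      fix y assume "y \<in> ?X"
      then obtain S u v where S: "y = cut_min_weight V E w S" "S \<subseteq> V" "u \<in> S" "v \<in> V" "v \<notin> S" "{u, v} \<notin> E"
        by blast
      have "u \<noteq> v" "u \<in> V" using S by auto
      then have eV: "{u,v} \<in> edges_on V" using S unfolding edges_on_def by auto
      let ?d = "mst_weight V E w - mst_weight V (insert {u,v} E) (w({u,v} := 0))"
      have "\<bar>?d\<bar> \<in> ?D" unfolding mem_Collect_eq
        by (rule exI[of _ "{u,v}"], rule exI[of _ "0::real"]) (use eV S(6) B0 in simp)
      then have "\<bar>?d\<bar> \<le> Sup ?D" by (rule cSup_upper[OF _ bdd])
      moreover have "?D \<noteq> {}" using \<open>\<bar>?d\<bar> \<in> ?D\<close> by blast
      moreover have "y \<le> ?d" using lower[OF S(2,3,4,5,6)] S(1) by simp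
      ultimately show "y \<le> RS_mst V E w B" unfolding RS_mst_def using max_or0_ne by force
    qed
    then have "Sup ?X \<le> RS_mst V E w B" using False by (intro cSup_least) auto
    then show ?thesis unfolding MX_def max_or0_ne[OF False] .
  qed
  show ?thesis using le1 le2 by simp
qed

end

lemma three:
  assumes "finite V" "card V \<ge> 3"
  obtains a b c where "a \<in> V" "b \<in> V" "c \<in> V" "a \<noteq> b" "a \<noteq> c" "b \<noteq> c"
proof -
  obtain a where a: "a \<in> V" using assms by fastforce
  have "card (V - {a}) \<ge> 2" using assms a by simp
  then have "V - {a} \<noteq> {}" by (intro notI) simp
  then obtain b where b: "b \<in> V - {a}" by blast
  have "card (V - {a} - {b}) \<ge> 1" using assms a b by (simp add: card_Diff_singleton)
  then have "V - {a} - {b} \<noteq> {}" by (intro notI) simp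
  then obtain c where c: "c \<in> V - {a} - {b}" by blast
  show ?thesis using that a b c by blast
qed

lemma GS_eq:
  assumes fV: "finite V" and c3: "card V \<ge> 3" and B0: "0 \<le> B"
  shows "GS_mst V B = B"
proof -
  let ?G = "{\<bar>mst_weight V E w - mst_weight V (insert e E) (w(e := x))\<bar> | E w e x.
      weighted_graph V E w B \<and> graph_connected V E \<and>
      e \<in> edges_on V \<and> e \<notin> E \<and> 0 \<le> x \<and> x \<le> B}"
  have ub: "\<forall>y\<in>?G. y \<le> B"
  proof
    fix y assume "y \<in> ?G"
    then obtain E w e x where y: "y = \<bar>mst_weight V E w - mst_weight V (insert e E) (w(e := x))\<bar>"
      "weighted_graph V E w B" "graph_connected V E" "e \<in> edges_on V" "e \<notin> E" "0 \<le> x" by blast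
    interpret g: wgc V E w B using y(2,3) fV unfolding weighted_graph_def by unfold_locales auto
    have "0 \<le> mst_weight V E w - mst_weight V (insert e E) (w(e := x))"
      "mst_weight V E w - mst_weight V (insert e E) (w(e := x)) \<le> MX V E w"
      by (rule g.d_bounds[OF y(4,5,6)])+
    then show "y \<le> B" using g.MX_le[OF B0] unfolding y(1) by linarith
  qed
  obtain a b c where abc: "a \<in> V" "b \<in> V" "c \<in> V" "a \<noteq> b" "a \<noteq> c" "b \<noteq> c"
    using three[OF fV c3] by blast
  define St where "St = {{c,y} | y. y \<in> V \<and> y \<noteq> c}"
  define w0 where "w0 = (\<lambda>_::'a set. B)"
  define e where "e = {a,b}"
  have StV: "St \<subseteq> edges_on V" unfolding St_def edges_on_def using abc by auto
  have wg: "weighted_graph V St w0 B" unfolding weighted_graph_def w0_def using StV B0 by auto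
  have cSt: "graph_connected V St"
  proof (rule conn_from[OF abc(3)])
    fix y assume "y \<in> V"
    show "(c,y) \<in> (erel St)\<^sup>*"
    proof (cases "y = c")
      case False
      then have "{c,y} \<in> St" unfolding St_def using \<open>y \<in> V\<close> by blast
      then show ?thesis by auto
    qed simp
  qed
  interpret s: wgc V St w0 B using fV StV wg cSt unfolding weighted_graph_def by unfold_locales auto
  have eV: "e \<in> edges_on V" unfolding e_def edges_on_def using abc by auto
  have eSt: "e \<notin> St" unfolding e_def St_def using abc by (auto simp: doubleton_eq_iff)
  have m1: "mst_weight V St w0 = (\<Sum>f\<in>St. w0 f)"
  proof -
    obtain T where T: "spanning_tree V St T" "mst_weight V St w0 = (\<Sum>f\<in>T. w0 f)"
      using mst_att[OF s.fE cSt] by blast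
    have TS: "T \<subseteq> St" and Tc: "graph_connected V T" using T(1) unfolding spanning_tree_def by auto
    have "St \<subseteq> T"
    proof
      fix g assume "g \<in> St"
      then obtain y where y: "g = {c,y}" "y \<in> V" "y \<noteq> c" unfolding St_def by blast
      have "(c,y) \<in> (erel T)\<^sup>*" using Tc y abc unfolding gc_def2 by blast
      then obtain x where "(x,y) \<in> erel T" using y(3) by (cases rule: rtranclE) auto
      then have xy: "{x,y} \<in> T" by simp
      then have "{x,y} \<in> St" using TS by blast
      then obtain z where "{x,y} = {c,z}" "z \<noteq> c" unfolding St_def by blast
      then have "{x,y} = {c,y}" using y(3) by (auto simp: doubleton_eq_iff)
      then show "g \<in> T" using xy y(1) by simp
    qed
    then show ?thesis using TS T(2) by simp
  qed
  define H where "H = insert e (St - {{c,b}})"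
  have HE: "H \<subseteq> insert e St" unfolding H_def by auto
  have cbSt: "{c,b} \<in> St" unfolding St_def using abc by blast
  have Hc: "graph_connected V H"
  proof (rule conn_from[OF abc(3)])
    fix y assume yV: "y \<in> V"
    show "(c,y) \<in> (erel H)\<^sup>*"
    proof (cases "y = c")
      case True then show ?thesis by simp
    next
      case False
      show ?thesis
      proof (cases "y = b")
        case True
        have "{c,a} \<in> H" unfolding H_def St_def using abc by (auto simp: doubleton_eq_iff)
        moreover have "{a,b} \<in> H" unfolding H_def e_def by simp
        ultimately have "(c,a) \<in> erel H" "(a,b) \<in> erel H" by auto
        then show ?thesis using True by (blast intro: rtrancl_into_rtrancl[OF r_into_rtrancl])
      next
        case False
        have "{c,y} \<in> H" unfolding H_def St_def using abc yV \<open>y \<noteq> c\<close> False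
          by (auto simp: doubleton_eq_iff)
        then show ?thesis by auto
      qed
    qed
  qed
  have fSt: "finite St" by (rule s.fE)
  have wE': "\<forall>f\<in>insert e St. 0 \<le> (w0(e:=0)) f" unfolding w0_def using B0 by auto
  have "mst_weight V (insert e St) (w0(e:=0)) \<le> (\<Sum>f\<in>H. (w0(e:=0)) f)"
    by (rule mst_le_conn[OF _ HE Hc wE']) (use fSt in simp)
  also have "\<dots> = (\<Sum>f\<in>St - {{c,b}}. (w0(e:=0)) f)"
    unfolding H_def using eSt fSt by simp
  also have "\<dots> = (\<Sum>f\<in>St - {{c,b}}. w0 f)" using eSt by (intro sum.cong) auto
  also have "\<dots> = (\<Sum>f\<in>St. w0 f) - B"
  proof -
    have "(\<Sum>f\<in>St. w0 f) = w0 {c,b} + (\<Sum>f\<in>St - {{c,b}}. w0 f)" by (rule sum.remove[OF fSt cbSt])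
    moreover have "w0 {c,b} = B" by (simp add: w0_def)
    ultimately show ?thesis by linarith
  qed
  finally have low: "B \<le> mst_weight V St w0 - mst_weight V (insert e St) (w0(e:=0))"
    using m1 by simp
  have up: "mst_weight V St w0 - mst_weight V (insert e St) (w0(e:=0)) \<le> B"
    using s.d_bounds(2)[OF eV eSt order_refl] s.MX_le[OF B0] by simp
  have "\<bar>mst_weight V St w0 - mst_weight V (insert e St) (w0(e:=0))\<bar> \<in> ?G"
    unfolding mem_Collect_eq
    by (rule exI[of _ St], rule exI[of _ w0], rule exI[of _ e], rule exI[of _ "0::real"])
       (use wg cSt eV eSt B0 in simp)
  moreover have "\<bar>mst_weight V St w0 - mst_weight V (insert e St) (w0(e:=0))\<bar> = B"
    using low up B0 by (subst abs_of_nonneg) linarith+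
  ultimately have "B \<in> ?G" by simp
  then show ?thesis unfolding GS_mst_def by (rule cSup_eq_maximum) (use ub in blast)
qed

theorem mainTheorem6:
  fixes V :: "'a set" and E :: "'a set set" and w :: "'a set \<Rightarrow> real" and B :: real
  assumes "finite V" and "card V \<ge> 3"
    and "weighted_graph V E w B" and "graph_connected V E"
  shows "RS_mst V E w B / GS_mst V B =
    max_or0 {cut_min_weight V E w S | S. S \<subseteq> V \<and> (\<exists>u\<in>S. \<exists>v\<in>V - S. {u, v} \<notin> E)} / B"
proof -
  interpret wgc V E w B using assms unfolding weighted_graph_def by unfold_locales auto
  obtain a b c where abc: "a \<in> V" "b \<in> V" "c \<in> V" "a \<noteq> b" "a \<noteq> c" "b \<noteq> c"
    using three[OF assms(1,2)] by blast
  have "(a,b) \<in> (erel E)\<^sup>*" using conn abc unfolding gc_def2 by blast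
  then obtain p q where "{p,q} \<in> E" using cross_exists[of a b E "{a}"] abc by blast
  then have B0: "0 \<le> B" using wE by force
  show ?thesis using RS_eq[OF B0] GS_eq[OF assms(1,2) B0] unfolding MX_def by simp
qed


end
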